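(* Let $G=(V,E)$ be an undirected multigraph, $0\le\delta\le 1/3$, and $A\subseteq V$. Let $S\subseteq V$ cross $A$, i.e. $S\cap A\ne\emptyset$ and $A\setminus S\neq\emptyset$. Suppose $S\cap A$ is not $(1-\delta)$-boundary sparse in $A$. Let $X\in\{S\cap A,\,A\setminus S\}$ satisfy $w(X,V\setminus A)=\min\{w(S\cap A,V\setminus A),w(A\setminus S,V\setminus A)\}$. Define $S'=S\setminus A$ if $X=S\cap A$, and $S'=S\cup A$ if $X=A\setminus S$. Then $$w(S',V\setminus S')\le(1+\tfrac{3\delta}{2})\,w(S,V\setminus S).$$
   Context: $w(P,Q)$ is the number of edges (with multiplicity) with one endpoint in $P$ and the other in $Q$, for disjoint $P,Q$. For $C\subseteq V$ and $\delta\le1$, a set $U\subsetneq C$ is $(1-\delta)$-boundary sparse in $C$ if $w(U,C\setminus U)<(1-\delta)\min\{w(U,V\setminus C),\,w(C\setminus U,V\setminus C)\}$. *)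

theory Defs
  imports Complex_Main
begin

text \<open>An undirected multigraph with vertex set V, finite edge index set E and
  endpoint map ends. Parallel edges are distinct elements of E.\<close>

definition multigraph :: "'v set \<Rightarrow> 'e set \<Rightarrow> ('e \<Rightarrow> 'v \<times> 'v) \<Rightarrow> bool" where
  "multigraph V E ends \<longleftrightarrow> finite V \<and> finite E \<and>
     (\<forall>e\<in>E. fst (ends e) \<in> V \<and> snd (ends e) \<in> V)"

definition w :: "'e set \<Rightarrow> ('e \<Rightarrow> 'v \<times> 'v) \<Rightarrow> 'v set \<Rightarrow> 'v set \<Rightarrow> nat" where
  "w E ends P Q = card {e\<in>E. (fst (ends e) \<in> P \<and> snd (ends e) \<in> Q) \<or>
                              (fst (ends e) \<in> Q \<and> snd (ends e) \<in> P)}"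

definition boundary_sparse ::
  "'v set \<Rightarrow> 'e set \<Rightarrow> ('e \<Rightarrow> 'v \<times> 'v) \<Rightarrow> real \<Rightarrow> 'v set \<Rightarrow> 'v set \<Rightarrow> bool" where
  "boundary_sparse V E ends \<delta> C U \<longleftrightarrow> U \<subset> C \<and>
     real (w E ends U (C - U)) <
       (1 - \<delta>) * real (min (w E ends U (V - C)) (w E ends (C - U) (V - C)))"

end

theory Submission
  imports Defs
begin

lemma w_sym: "w E ends P Q = w E ends Q P"
  unfolding w_def by (rule arg_cong[where f=card]) blast

lemma w_un2:
  assumes "finite E" "P \<inter> Q1 = {}" "P \<inter> Q2 = {}" "Q1 \<inter> Q2 = {}"
  shows "w E ends P (Q1 \<union> Q2) = w E ends P Q1 + w E ends P Q2"
proof -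
  let ?A = "{e\<in>E. (fst (ends e) \<in> P \<and> snd (ends e) \<in> Q1) \<or> (fst (ends e) \<in> Q1 \<and> snd (ends e) \<in> P)}"
  let ?B = "{e\<in>E. (fst (ends e) \<in> P \<and> snd (ends e) \<in> Q2) \<or> (fst (ends e) \<in> Q2 \<and> snd (ends e) \<in> P)}"
  have eq: "{e\<in>E. (fst (ends e) \<in> P \<and> snd (ends e) \<in> Q1 \<union> Q2) \<or> (fst (ends e) \<in> Q1 \<union> Q2 \<and> snd (ends e) \<in> P)} = ?A \<union> ?B"
    by blast
  have "?A \<inter> ?B = {}" using assms by blast
  moreover have "finite ?A" "finite ?B" using assms(1) by auto
  ultimately show ?thesis unfolding w_def eq by (simp add: card_Un_disjoint)
qed

lemma w_un3:
  assumes "finite E" "P \<inter> Q1 = {}" "P \<inter> Q2 = {}" "Q1 \<inter> Q2 = {}" "P \<inter> Q3 = {}" "Q1 \<inter> Q3 = {}" "Q2 \<inter> Q3 = {}"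
  shows "w E ends P (Q1 \<union> Q2 \<union> Q3) = w E ends P Q1 + w E ends P Q2 + w E ends P Q3"
proof -
  have "w E ends P (Q1 \<union> Q2 \<union> Q3) = w E ends P (Q1 \<union> Q2) + w E ends P Q3"
    using assms by (intro w_un2) auto
  then show ?thesis using assms w_un2 by simp
qed

theorem mainTheorem8:
  fixes V :: "'v set" and E :: "'e set" and ends :: "'e \<Rightarrow> 'v \<times> 'v"
    and \<delta> :: real and A S X :: "'v set"
  assumes G: "multigraph V E ends"
    and d0: "0 \<le> \<delta>" and d1: "\<delta> \<le> 1/3"
    and AV: "A \<subseteq> V" and SV: "S \<subseteq> V"
    and cross1: "S \<inter> A \<noteq> {}" and cross2: "A - S \<noteq> {}"
    and notsparse: "\<not> boundary_sparse V E ends \<delta> A (S \<inter> A)"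
    and Xchoice: "X \<in> {S \<inter> A, A - S}"
    and Xmin: "w E ends X (V - A) =
                 min (w E ends (S \<inter> A) (V - A)) (w E ends (A - S) (V - A))"
  shows "real (w E ends (if X = S \<inter> A then S - A else S \<union> A)
                        (V - (if X = S \<inter> A then S - A else S \<union> A)))
           \<le> (1 + 3 * \<delta> / 2) * real (w E ends S (V - S))"
proof -
  have fE: "finite E" using G unfolding multigraph_def by blast
  define a where "a = S \<inter> A"
  define b where "b = A - S"
  define c where "c = S - A"
  define d where "d = V - (S \<union> A)"
  have dis: "a \<inter> b = {}" "a \<inter> c = {}" "a \<inter> d = {}" "b \<inter> c = {}" "b \<inter> d = {}" "c \<inter> d = {}"
    unfolding a_def b_def c_def d_def by auto
  have dis': "b \<inter> a = {}" "c \<inter> a = {}" "d \<inter> a = {}" "c \<inter> b = {}" "d \<inter> b = {}" "d \<inter> c = {}"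
    using dis by auto
  have VA: "V - A = c \<union> d" unfolding c_def d_def using SV by auto
  have VS: "V - S = b \<union> d" unfolding b_def d_def using AV by auto
  have Sab: "S = a \<union> c" unfolding a_def c_def by auto
  have Vc: "V - (S - A) = a \<union> b \<union> d" unfolding a_def b_def d_def using AV by auto
  have SuA: "S \<union> A = c \<union> a \<union> b" unfolding a_def b_def c_def by auto
  have VSA: "V - (S \<union> A) = d" unfolding d_def by simp
  have ab: "a \<noteq> b" using cross1 dis unfolding a_def by auto
  define e12 where "e12 = w E ends a b"
  define e13 where "e13 = w E ends a c"
  define e14 where "e14 = w E ends a d"
  define e23 where "e23 = w E ends b c"
  define e24 where "e24 = w E ends b d"
  define e34 where "e34 = w E ends c d"
  have wAc: "w E ends a (V - A) = e13 + e14" unfolding VA e13_def e14_def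
    using w_un2[OF fE, of a c d] dis dis' by simp
  have wBc: "w E ends b (V - A) = e23 + e24" unfolding VA e23_def e24_def
    using w_un2[OF fE, of b c d] dis dis' by simp
  have wS: "w E ends S (V - S) = e12 + e14 + e23 + e34"
  proof -
    have "w E ends S (V - S) = w E ends (b \<union> d) (a \<union> c)" using VS Sab w_sym by metis
    also have "\<dots> = w E ends a (b \<union> d) + w E ends c (b \<union> d)"
      proof -
        have "(b \<union> d) \<inter> a = {}" "(b \<union> d) \<inter> c = {}" "a \<inter> c = {}" using dis by auto
        then show ?thesis using w_un2[OF fE, of "b \<union> d" a c ends] w_sym by metis
      qed
    also have "\<dots> = e12 + e14 + e23 + e34"
      using w_un2[OF fE, of a b d] w_un2[OF fE, of c b d] dis dis'
      by (simp add: e12_def e14_def e23_def e34_def w_sym[of E ends c b])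
    finally show ?thesis .
  qed
  have w1: "w E ends (S - A) (V - (S - A)) = e13 + e23 + e34"
    unfolding Vc
    using w_un3[OF fE, of c a b d] dis dis'
    by (simp add: c_def[symmetric] e13_def e23_def e34_def w_sym[of E ends c a] w_sym[of E ends c b])
  have w2: "w E ends (S \<union> A) (V - (S \<union> A)) = e14 + e24 + e34"
  proof -
    have "w E ends (S \<union> A) (V - (S \<union> A)) = w E ends d (c \<union> a \<union> b)" using VSA SuA w_sym by metis
    also have "\<dots> = e14 + e24 + e34"
      using w_un3[OF fE, of d c a b] dis dis'
      by (simp add: e14_def e24_def e34_def w_sym[of E ends d])
    finally show ?thesis .
  qed
  have sub: "a \<subset> A" unfolding a_def using cross2 by auto
  have ns: "real e12 \<ge> (1 - \<delta>) * real (min (e13 + e14) (e23 + e24))"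
  proof -
    have Aa: "A - a = b" unfolding a_def b_def by auto
    show ?thesis using notsparse sub wAc wBc unfolding boundary_sparse_def a_def[symmetric] Aa
      by (simp add: e12_def)
  qed
  show ?thesis
  proof (cases "X = S \<inter> A")
    case True
    then have m: "e13 + e14 \<le> e23 + e24" using Xmin wAc wBc unfolding a_def b_def by simp
    have e12: "real e12 \<ge> (1 - \<delta>) * (real e13 + real e14)" using ns m by simp
    have k: "\<delta> * real e13 \<le> 3 * \<delta> / 2 * real e12"
    proof -
      have p: "0 \<le> \<delta> * real e13 * (1 - 3*\<delta>)" using d0 d1 by simp
      have q: "3 * \<delta> / 2 * ((1 - \<delta>) * real e13) - \<delta> * real e13 = \<delta> * real e13 * (1 - 3*\<delta>) / 2"
        by (simp add: field_simps)
      have "\<delta> * real e13 \<le> 3 * \<delta> / 2 * ((1 - \<delta>) * real e13)"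
        using p q by linarith
      also have "\<dots> \<le> 3 * \<delta> / 2 * real e12"
      proof (rule mult_left_mono)
        have "0 \<le> (1 - \<delta>) * real e14" using d1 by simp
        then show "(1 - \<delta>) * real e13 \<le> real e12" using e12 by (simp add: algebra_simps)
        show "0 \<le> 3 * \<delta> / 2" using d0 by simp
      qed
      finally show ?thesis .
    qed
    have k2: "0 \<le> 3 * \<delta> / 2 * (real e14 + real e23 + real e34)" using d0 by simp
    have k3: "(1 - \<delta>) * (real e13 + real e14) = real e13 + real e14 - \<delta> * real e13 - \<delta> * real e14"
      by (simp add: algebra_simps)
    have k4: "\<delta> * real e14 \<le> real e14" using d1 mult_right_mono[of \<delta> 1 "real e14"] by simp
    have W: "(1 + 3 * \<delta> / 2) * real (w E ends S (V - S)) = real e12 + real e14 + real e23 + real e34 + 3 * \<delta> / 2 * real e12 + 3 * \<delta> / 2 * (real e14 + real e23 + real e34)"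
      unfolding wS by (simp add: algebra_simps)
    show ?thesis using True w1 W e12 k k2 k3 k4 by simp
  next
    case False
    then have X: "X = A - S" using Xchoice by auto
    then have m: "e23 + e24 \<le> e13 + e14" using Xmin wAc wBc unfolding a_def b_def by simp
    have e12: "real e12 \<ge> (1 - \<delta>) * (real e23 + real e24)" using ns m by simp
    have k: "\<delta> * real e24 \<le> 3 * \<delta> / 2 * real e12"
    proof -
      have p: "0 \<le> \<delta> * real e24 * (1 - 3*\<delta>)" using d0 d1 by simp
      have q: "3 * \<delta> / 2 * ((1 - \<delta>) * real e24) - \<delta> * real e24 = \<delta> * real e24 * (1 - 3*\<delta>) / 2"
        by (simp add: field_simps)
      have "\<delta> * real e24 \<le> 3 * \<delta> / 2 * ((1 - \<delta>) * real e24)"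
        using p q by linarith
      also have "\<dots> \<le> 3 * \<delta> / 2 * real e12"
      proof (rule mult_left_mono)
        have "0 \<le> (1 - \<delta>) * real e23" using d1 by simp
        then show "(1 - \<delta>) * real e24 \<le> real e12" using e12 by (simp add: algebra_simps)
        show "0 \<le> 3 * \<delta> / 2" using d0 by simp
      qed
      finally show ?thesis .
    qed
    have k2: "0 \<le> 3 * \<delta> / 2 * (real e14 + real e23 + real e34)" using d0 by simp
    have k3: "(1 - \<delta>) * (real e23 + real e24) = real e23 + real e24 - \<delta> * real e23 - \<delta> * real e24"
      by (simp add: algebra_simps)
    have k4: "\<delta> * real e23 \<le> real e23" using d1 mult_right_mono[of \<delta> 1 "real e23"] by simp
    have W: "(1 + 3 * \<delta> / 2) * real (w E ends S (V - S)) = real e12 + real e14 + real e23 + real e34 + 3 * \<delta> / 2 * real e12 + 3 * \<delta> / 2 * (real e14 + real e23 + real e34)"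
      unfolding wS by (simp add: algebra_simps)
    show ?thesis using False w2 W e12 k k2 k3 k4 by simp
  qed
qed

end
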